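(* Let $p$ be a lattice norm on $\mathbb{R}^2$ with $p((1,0))=1$ and let $\Phi$ be an Orlicz function satisfying $\lim_{u\to+\infty}\Phi(u)/u=+\infty$. Then for every $x\in L^\Phi(\mu)\setminus\{0\}$ there exists $l\in(0,+\infty)$ such that $$\|x\|_{\Phi,p}=\frac1l\,p\big((1,I_\Phi(lx))\big).$$
   Context: $(\Omega,\Sigma,\mu)$ is a $\sigma$-finite complete measure space, $L^0$ the space of (classes of a.e. equal) real measurable functions. An Orlicz function is a function $\Phi:\mathbb{R}\to[0,\infty)$ which is convex, even, vanishes at $0$ and is not identically zero. $I_\Phi(x)=\int_\Omega\Phi(x(t))\,d\mu\in[0,+\infty]$; $L^\Phi(\mu)=\{x\in L^0: I_\Phi(\lambda x)<\infty\text{ for some }\lambda>0\}$. A lattice norm on $\mathbb{R}^2$ is a norm $p$ with $p((u,v))\le p((u',v'))$ whenever $|u|\le|u'|,|v|\le|v'|$. For such $p$ with $p((1,0))=1$, $\|x\|_{\Phi,p}=\inf_{k>0}\frac1k p((1,I_\Phi(kx)))$ for $x\in L^\Phi(\mu)$, with the convention $p((1,+\infty))=+\infty$. *)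

theory Defs
  imports "HOL-Analysis.Analysis"
begin

definition orlicz_function :: "(real \<Rightarrow> real) \<Rightarrow> bool" where
  "orlicz_function \<Phi> \<longleftrightarrow> convex_on UNIV \<Phi> \<and> (\<forall>u. \<Phi> (-u) = \<Phi> u) \<and> (\<forall>u. \<Phi> u \<ge> 0)
     \<and> \<Phi> 0 = 0 \<and> (\<exists>u. \<Phi> u \<noteq> 0)"

definition lattice_norm :: "(real \<times> real \<Rightarrow> real) \<Rightarrow> bool" where
  "lattice_norm p \<longleftrightarrow>
     (\<forall>v. p v = 0 \<longleftrightarrow> v = (0,0)) \<and>
     (\<forall>c u v. p (c * u, c * v) = \<bar>c\<bar> * p (u, v)) \<and>
     (\<forall>u v u' v'. p (u + u', v + v') \<le> p (u, v) + p (u', v')) \<and>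
     (\<forall>u v u' v'. \<bar>u\<bar> \<le> \<bar>u'\<bar> \<and> \<bar>v\<bar> \<le> \<bar>v'\<bar> \<longrightarrow> p (u, v) \<le> p (u', v'))"

definition orlicz_modular :: "'a measure \<Rightarrow> (real \<Rightarrow> real) \<Rightarrow> ('a \<Rightarrow> real) \<Rightarrow> ennreal" where
  "orlicz_modular M \<Phi> x = (\<integral>\<^sup>+ t. ennreal (\<Phi> (x t)) \<partial>M)"

definition orlicz_space :: "'a measure \<Rightarrow> (real \<Rightarrow> real) \<Rightarrow> ('a \<Rightarrow> real) set" where
  "orlicz_space M \<Phi> = {x \<in> borel_measurable M.
      \<exists>c>0. orlicz_modular M \<Phi> (\<lambda>t. c * x t) < \<infinity>}"

(* (1/k) p((1, I_\<Phi>(kx))), with the convention p((1,+\<infinity>)) = +\<infinity> *)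
definition orlicz_p_term :: "'a measure \<Rightarrow> (real \<Rightarrow> real) \<Rightarrow> (real \<times> real \<Rightarrow> real)
    \<Rightarrow> ('a \<Rightarrow> real) \<Rightarrow> real \<Rightarrow> ennreal" where
  "orlicz_p_term M \<Phi> p x k =
     (if orlicz_modular M \<Phi> (\<lambda>t. k * x t) = \<infinity> then \<infinity>
      else ennreal ((1 / k) * p (1, enn2real (orlicz_modular M \<Phi> (\<lambda>t. k * x t)))))"

definition orlicz_p_norm :: "'a measure \<Rightarrow> (real \<Rightarrow> real) \<Rightarrow> (real \<times> real \<Rightarrow> real)
    \<Rightarrow> ('a \<Rightarrow> real) \<Rightarrow> ennreal" where
  "orlicz_p_norm M \<Phi> p x = (INF k\<in>{0<..}. orlicz_p_term M \<Phi> p x k)"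

end

theory Submission imports Defs begin

lemma phi_mono:
  assumes "orlicz_function \<Phi>" "\<bar>a\<bar> \<le> \<bar>b\<bar>"
  shows "\<Phi> a \<le> \<Phi> b"
proof -
  have cv: "convex_on UNIV \<Phi>" and ev: "\<And>u. \<Phi> (-u) = \<Phi> u" and nn: "\<And>u. \<Phi> u \<ge> 0" and z: "\<Phi> 0 = 0"
    using assms(1) unfolding orlicz_function_def by auto
  have ea: "\<Phi> a = \<Phi> \<bar>a\<bar>" "\<Phi> b = \<Phi> \<bar>b\<bar>" using ev by (auto simp: abs_if)
  show ?thesis
  proof (cases "\<bar>b\<bar> = 0")
    case True then show ?thesis using assms(2) by simp
  next
    case False
    define t where "t = \<bar>a\<bar> / \<bar>b\<bar>"
    have t: "t \<ge> 0" "t \<le> 1" using assms(2) False by (auto simp: t_def)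
    have e: "(1 - t) *\<^sub>R 0 + t *\<^sub>R \<bar>b\<bar> = \<bar>a\<bar>" using False by (simp add: t_def)
    have "\<Phi> ((1 - t) *\<^sub>R 0 + t *\<^sub>R \<bar>b\<bar>) \<le> (1 - t) * \<Phi> 0 + t * \<Phi> \<bar>b\<bar>"
      using convex_onD[OF cv t, of 0 "\<bar>b\<bar>"] by blast
    then have "\<Phi> \<bar>a\<bar> \<le> (1 - t) * \<Phi> 0 + t * \<Phi> \<bar>b\<bar>" by (simp only: e)
    also have "\<dots> \<le> \<Phi> \<bar>b\<bar>" using z t nn[of "\<bar>b\<bar>"] by (simp add: mult_left_le_one_le)
    finally show ?thesis using ea by simp
  qed
qed

lemma phi_cont: "orlicz_function \<Phi> \<Longrightarrow> continuous_on UNIV \<Phi>"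
  by (rule convex_on_continuous) (auto simp: orlicz_function_def)

lemma phi_meas:
  assumes "orlicz_function \<Phi>" "x \<in> borel_measurable M"
  shows "(\<lambda>t. ennreal (\<Phi> (k * x t))) \<in> borel_measurable M"
proof -
  have "\<Phi> \<in> borel_measurable borel" using phi_cont[OF assms(1)] by (rule borel_measurable_continuous_onI)
  then have "(\<lambda>t. \<Phi> (k * x t)) \<in> borel_measurable M"
    using assms(2) by (intro measurable_compose[OF _ \<open>\<Phi> \<in> _\<close>]) auto
  then show ?thesis by simp
qed

lemma p_facts:
  assumes "lattice_norm p" "p (1,0) = 1"
  shows "p (0,1) > 0" "\<And>J. p (0, J) = \<bar>J\<bar> * p (0,1)" "\<And>J. J \<ge> 0 \<Longrightarrow> p (1, J) \<ge> 1"
    "\<And>J. p (0,J) \<le> p (1, J)"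
    "\<And>J J'. \<bar>p (1,J) - p (1,J')\<bar> \<le> \<bar>J - J'\<bar> * p (0,1)"
    "\<And>J J'. 0 \<le> J \<Longrightarrow> J \<le> J' \<Longrightarrow> p (1,J) \<le> p (1,J')"
proof -
  note L = assms(1)[unfolded lattice_norm_def]
  note z = L[THEN conjunct1, rule_format]
  note h = L[THEN conjunct2, THEN conjunct1, rule_format]
  note tr = L[THEN conjunct2, THEN conjunct2, THEN conjunct1, rule_format]
  have mo: "\<And>u v u' v'. \<bar>u\<bar> \<le> \<bar>u'\<bar> \<Longrightarrow> \<bar>v\<bar> \<le> \<bar>v'\<bar> \<Longrightarrow> p (u, v) \<le> p (u', v')"
    using L[THEN conjunct2, THEN conjunct2, THEN conjunct2] by blast
  have "p (0,1) \<ge> p (0,0)" by (rule mo) auto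
  moreover have "p (0,1) \<noteq> 0" using z by simp
  moreover have "p (0,0) = 0" using z by simp
  ultimately show "p (0,1) > 0" by simp
  show hh: "\<And>J. p (0, J) = \<bar>J\<bar> * p (0,1)"
  proof -
    fix J :: real
    have "p (J * 0, J * 1) = \<bar>J\<bar> * p (0,1)" by (rule h)
    then show "p (0, J) = \<bar>J\<bar> * p (0,1)" by simp
  qed
  show "\<And>J. J \<ge> 0 \<Longrightarrow> p (1, J) \<ge> 1" using mo[of 1 1 0] assms(2) by simp
  show "\<And>J. p (0,J) \<le> p (1, J)" by (rule mo) auto
  show "\<And>J J'. 0 \<le> J \<Longrightarrow> J \<le> J' \<Longrightarrow> p (1,J) \<le> p (1,J')" by (rule mo) auto
  fix J J' :: real
  have a: "p (1,J) \<le> p (1,J') + \<bar>J - J'\<bar> * p (0,1)"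
    using tr[of 1 0 J' "J - J'"] hh[of "J-J'"] by simp
  have b: "p (1,J') \<le> p (1,J) + \<bar>J - J'\<bar> * p (0,1)"
    using tr[of 1 0 J "J' - J"] hh[of "J'-J"] by (simp add: abs_minus_commute)
  show "\<bar>p (1,J) - p (1,J')\<bar> \<le> \<bar>J - J'\<bar> * p (0,1)" using a b by linarith
qed


lemma exists_delta:
  fixes x :: "'a \<Rightarrow> real"
  assumes xm: "x \<in> borel_measurable M" and nz: "\<not> (AE t in M. x t = 0)"
  shows "\<exists>\<delta>>0. emeasure M {t\<in>space M. \<delta> \<le> \<bar>x t\<bar>} \<noteq> 0"
proof (rule ccontr)
  assume "\<not> ?thesis"
  then have z: "\<And>d. d > 0 \<Longrightarrow> emeasure M {t\<in>space M. d \<le> \<bar>x t\<bar>} = 0" by auto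
  have "AE t in M. \<bar>x t\<bar> < inverse (real (Suc n))" for n
  proof (rule AE_I')
    have s: "{t\<in>space M. inverse (real (Suc n)) \<le> \<bar>x t\<bar>} \<in> sets M" using xm by measurable
    show "{t\<in>space M. inverse (real (Suc n)) \<le> \<bar>x t\<bar>} \<in> null_sets M"
      using s z[of "inverse (real (Suc n))"] by (auto intro: null_setsI)
    show "{t \<in> space M. \<not> \<bar>x t\<bar> < inverse (real (Suc n))} \<subseteq> {t\<in>space M. inverse (real (Suc n)) \<le> \<bar>x t\<bar>}"
      by auto
  qed
  then have "AE t in M. \<forall>n. \<bar>x t\<bar> < inverse (real (Suc n))" by (simp add: AE_all_countable)
  then have "AE t in M. x t = 0"
  proof (rule AE_mp, intro AE_I2 impI)
    fix t assume a: "\<forall>n. \<bar>x t\<bar> < inverse (real (Suc n))"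
    show "x t = 0"
    proof (rule ccontr)
      assume "x t \<noteq> 0"
      then have "0 < \<bar>x t\<bar>" by simp
      then obtain n where "inverse (real (Suc n)) < \<bar>x t\<bar>" using reals_Archimedean by blast
      with a show False by (meson less_asym)
    qed
  qed
  with nz show False by simp
qed

theorem lemma1:
  fixes M :: "'a measure" and \<Phi> :: "real \<Rightarrow> real" and p :: "real \<times> real \<Rightarrow> real"
    and x :: "'a \<Rightarrow> real"
  assumes "sigma_finite_measure M" and "complete_measure M"
    and "lattice_norm p" and "p (1, 0) = 1"
    and "orlicz_function \<Phi>"
    and "filterlim (\<lambda>u. \<Phi> u / u) at_top at_top"
    and "x \<in> orlicz_space M \<Phi>"
    and "\<not> (AE t in M. x t = 0)"
  shows "\<exists>l>0. orlicz_p_norm M \<Phi> p x = orlicz_p_term M \<Phi> p x l"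
proof -
  note Of = assms(5)
  note pf = p_facts[OF assms(3,4)]
  have xm: "x \<in> borel_measurable M" using assms(7) by (simp add: orlicz_space_def)
  define I where "I k = orlicz_modular M \<Phi> (\<lambda>t. k * x t)" for k
  define F where "F k = orlicz_p_term M \<Phi> p x k" for k
  define p01 where "p01 = p (0,1)"
  have p01: "p01 > 0" using pf(1) by (simp add: p01_def)
  have Fd: "F k = (if I k = \<infinity> then \<infinity> else ennreal ((1/k) * p (1, enn2real (I k))))" for k
    by (simp add: F_def I_def orlicz_p_term_def)
  define m where "m = orlicz_p_norm M \<Phi> p x"
  have mI: "m = (INF k\<in>{0<..}. F k)" by (simp add: m_def F_def orlicz_p_norm_def)
  obtain c where c: "c > 0" "I c < \<infinity>" using assms(7) by (auto simp: orlicz_space_def I_def)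
  have "m \<le> F c" unfolding mI using c by (intro INF_lower) auto
  also have "F c < \<infinity>" using c by (simp add: Fd)
  finally have mfin: "m < \<infinity>" .
  define mr where "mr = enn2real m"
  have mmr: "m = ennreal mr" using mfin by (simp add: mr_def)
  have mr0: "mr \<ge> 0" by (simp add: mr_def)
  have "\<exists>k>0. I k \<noteq> \<infinity> \<and> (1/k) * p (1, enn2real (I k)) < mr + inverse (real (Suc n))" for n
  proof -
    have "m < ennreal (mr + inverse (real (Suc n)))" unfolding mmr
      using mr0 by (subst ennreal_less_iff) auto
    then obtain k where k: "k \<in> {0<..}" "F k < ennreal (mr + inverse (real (Suc n)))"
      unfolding mI by (auto simp: INF_less_iff)
    then have Ik: "I k \<noteq> \<infinity>" by (auto simp: Fd split: if_splits)
    then have "ennreal ((1/k) * p (1, enn2real (I k))) < ennreal (mr + inverse (real (Suc n)))"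
      using k(2) by (simp add: Fd)
    then have "(1/k) * p (1, enn2real (I k)) < mr + inverse (real (Suc n))"
      by (metis ennreal_leI not_le)
    with k Ik show ?thesis by auto
  qed
  then obtain ks where ks: "\<And>n. ks n > 0" "\<And>n. I (ks n) \<noteq> \<infinity>"
     "\<And>n. (1/ks n) * p (1, enn2real (I (ks n))) < mr + inverse (real (Suc n))"
    by metis
  define J where "J n = enn2real (I (ks n))" for n
  define val where "val n = (1/ks n) * p (1, J n)" for n
  have J0: "J n \<ge> 0" for n by (simp add: J_def)
  have IJ: "I (ks n) = ennreal (J n)" for n using ks(2)[of n] by (simp add: J_def less_top)
  have vlt: "val n < mr + inverse (real (Suc n))" for n using ks(3) by (simp add: val_def J_def)
  have vlt1: "val n < mr + 1" for n
  proof -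
    have "inverse (real (Suc n)) \<le> 1" by (simp add: inverse_le_1_iff)
    then show ?thesis using vlt[of n] by linarith
  qed
  have vge: "val n \<ge> J n * p01 / ks n" for n
  proof -
    have "J n * p01 \<le> p (1, J n)" using pf(2)[of "J n"] pf(4)[of "J n"] J0[of n] by (simp add: p01_def)
    then show ?thesis using ks(1)[of n] by (simp add: val_def divide_right_mono)
  qed
  have kslow: "ks n \<ge> 1 / (mr + 1)" for n
  proof -
    have "1 \<le> p (1, J n)" using pf(3) J0 by auto
    then have "1 / ks n \<le> val n" using ks(1)[of n] by (simp add: val_def divide_right_mono)
    then have "1 / ks n < mr + 1" using vlt1[of n] by linarith
    then show ?thesis using ks(1)[of n] mr0 by (simp add: field_simps)
  qed

  obtain \<delta> where d: "\<delta> > 0" "emeasure M {t\<in>space M. \<delta> \<le> \<bar>x t\<bar>} \<noteq> 0"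
    using exists_delta[OF xm assms(8)] by blast
  define A where "A = {t\<in>space M. \<delta> \<le> \<bar>x t\<bar>}"
  have As: "A \<in> sets M" unfolding A_def using xm by measurable
  define q where "q = min (emeasure M A) 1"
  define c0 where "c0 = enn2real q"
  have qA: "q \<le> emeasure M A" by (simp add: q_def)
  have qtop: "q < top" by (simp add: q_def min.strict_coboundedI2)
  have qpos: "q > 0" using d(2) by (simp add: q_def A_def zero_less_iff_neq_zero)
  have c0: "c0 > 0" using qtop qpos by (simp add: c0_def enn2real_positive_iff)
  have c0q: "ennreal c0 = q" using qtop by (simp add: c0_def)
  have Ilow: "ennreal (\<Phi> (k * \<delta>) * c0) \<le> I k" if k: "k > 0" for k
  proof -
    have P0: "\<Phi> (k * \<delta>) \<ge> 0" using Of by (simp add: orlicz_function_def)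
    have "ennreal (\<Phi> (k * \<delta>) * c0) = ennreal (\<Phi> (k * \<delta>)) * q"
      using P0 c0 c0q by (simp add: ennreal_mult)
    also have "\<dots> \<le> ennreal (\<Phi> (k * \<delta>)) * emeasure M A" using qA by (intro mult_left_mono) auto
    also have "\<dots> = (\<integral>\<^sup>+ t. ennreal (\<Phi> (k * \<delta>)) * indicator A t \<partial>M)"
      using As by (simp add: nn_integral_cmult_indicator)
    also have "\<dots> \<le> (\<integral>\<^sup>+ t. ennreal (\<Phi> (k * x t)) \<partial>M)"
    proof (rule nn_integral_mono)
      fix t assume "t \<in> space M"
      show "ennreal (\<Phi> (k * \<delta>)) * indicator A t \<le> ennreal (\<Phi> (k * x t))"
      proof (cases "t \<in> A")
        case True
        then have "\<bar>k * \<delta>\<bar> \<le> \<bar>k * x t\<bar>" using k d(1) by (simp add: A_def abs_mult)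
        then have "\<Phi> (k * \<delta>) \<le> \<Phi> (k * x t)" by (rule phi_mono[OF Of])
        then show ?thesis using True by (simp add: ennreal_leI)
      qed simp
    qed
    finally show ?thesis by (simp add: I_def orlicz_modular_def)
  qed
  have Jlow: "\<Phi> (ks n * \<delta>) * c0 \<le> J n" for n
    using Ilow[OF ks(1)[of n]] IJ[of n] J0[of n] by simp
  obtain U where U: "\<And>u. u \<ge> U \<Longrightarrow> \<Phi> u / u \<ge> (mr + 1) / (\<delta> * c0 * p01)"
    using assms(6) unfolding filterlim_at_top eventually_at_top_linorder by blast
  define b where "b = max U 1 / \<delta>"
  have ksup: "ks n \<le> b" for n
  proof (rule ccontr)
    assume "\<not> ks n \<le> b"
    then have kb: "ks n > b" by simp
    define u where "u = ks n * \<delta>"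
    have u1: "u > max U 1" using kb d(1) by (simp add: u_def b_def field_simps)
    have u0: "u > 0" using u1 by simp
    have "\<Phi> u / u \<ge> (mr + 1) / (\<delta> * c0 * p01)" using U u1 by simp
    then have Pu: "\<Phi> u \<ge> (mr + 1) / (\<delta> * c0 * p01) * u" using u0 by (simp add: field_simps)
    have "(mr + 1) = (mr + 1) / (\<delta> * c0 * p01) * u * c0 * p01 / ks n"
      using d(1) c0 p01 ks(1)[of n] mr0 by (simp add: u_def field_simps)
    also have "\<dots> \<le> \<Phi> u * c0 * p01 / ks n"
      using Pu c0 p01 ks(1)[of n] by (intro divide_right_mono mult_right_mono) auto
    also have "\<dots> \<le> J n * p01 / ks n"
      using Jlow[of n] p01 ks(1)[of n] by (intro divide_right_mono mult_right_mono) (auto simp: u_def)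
    also have "\<dots> \<le> val n" by (rule vge)
    finally show False using vlt1[of n] by simp
  qed
  define B where "B = b * (mr + 1) / p01"
  have Jup: "J n \<le> B" for n
  proof -
    have "J n * p01 / ks n < mr + 1" using vge[of n] vlt1[of n] by linarith
    then have "J n * p01 < (mr + 1) * ks n" using ks(1)[of n] by (simp add: field_simps)
    also have "\<dots> \<le> (mr + 1) * b" using ksup[of n] mr0 by (intro mult_left_mono) auto
    finally show ?thesis using p01 by (simp add: B_def field_simps)
  qed

  define S where "S = {1 / (mr + 1) .. b} \<times> {0 .. B}"
  have "compact S" unfolding S_def by (intro compact_Times compact_Icc)
  then have "seq_compact S" by (rule compact_imp_seq_compact)
  moreover have "\<forall>n. (ks n, J n) \<in> S" using kslow ksup J0 Jup by (auto simp: S_def)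
  ultimately obtain l r where lr: "l \<in> S" "strict_mono r" "((\<lambda>n. (ks n, J n)) \<circ> r) \<longlonglongrightarrow> l"
    by (rule seq_compactE)
  define ka where "ka = fst l"
  define Ja where "Ja = snd l"
  have kalow: "ka \<ge> 1 / (mr + 1)" and Ja0: "Ja \<ge> 0" using lr(1) by (auto simp: S_def ka_def Ja_def)
  have ka0: "ka > 0" proof -
    have "1 / (mr + 1) > 0" using mr0 by simp
    then show ?thesis using kalow by linarith
  qed
  have kconv: "(\<lambda>n. ks (r n)) \<longlonglongrightarrow> ka"
    using tendsto_fst[OF lr(3)] by (simp add: ka_def o_def)
  have Jconv: "(\<lambda>n. J (r n)) \<longlonglongrightarrow> Ja"
    using tendsto_snd[OF lr(3)] by (simp add: Ja_def o_def)
  have pconv: "(\<lambda>n. p (1, J (r n))) \<longlonglongrightarrow> p (1, Ja)"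
  proof -
    have j0: "(\<lambda>n. J (r n) - Ja) \<longlonglongrightarrow> 0" using Jconv by (rule LIM_zero)
    then have "(\<lambda>n. \<bar>J (r n) - Ja\<bar>) \<longlonglongrightarrow> 0" using tendsto_rabs[OF j0] by simp
    then have g: "(\<lambda>n. \<bar>J (r n) - Ja\<bar> * p01) \<longlonglongrightarrow> 0" by (simp add: tendsto_mult_left_zero)
    have "(\<lambda>n. p (1, J (r n)) - p (1, Ja)) \<longlonglongrightarrow> 0"
      by (rule Lim_null_comparison[OF _ g]) (simp add: pf(5) p01_def)
    then show ?thesis by (rule LIM_zero_cancel)
  qed
  have vconv: "(\<lambda>n. val (r n)) \<longlonglongrightarrow> (1 / ka) * p (1, Ja)"
    unfolding val_def using ka0 by (intro tendsto_mult tendsto_divide kconv pconv tendsto_const) auto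
  have bconv: "(\<lambda>n. mr + inverse (real (Suc n))) \<longlonglongrightarrow> mr"
    using tendsto_add[OF tendsto_const LIMSEQ_inverse_real_of_nat, of mr] by simp
  have vle: "(1 / ka) * p (1, Ja) \<le> mr"
  proof (rule LIMSEQ_le[OF vconv bconv], intro exI allI impI)
    fix n
    have "n \<le> r n" using lr(2) by (rule seq_suble)
    then have "inverse (real (Suc (r n))) \<le> inverse (real (Suc n))"
      by (simp add: le_imp_inverse_le)
    then show "val (r n) \<le> mr + inverse (real (Suc n))" using vlt[of "r n"] by linarith
  qed
  have Ile: "I ka \<le> ennreal Ja"
  proof -
    have ct: "isCont \<Phi> y" for y
      using phi_cont[OF Of] by (simp add: continuous_on_eq_continuous_at)
    have pw: "liminf (\<lambda>n. ennreal (\<Phi> (ks (r n) * x t))) = ennreal (\<Phi> (ka * x t))" for t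
    proof (rule lim_imp_Liminf)
      show "\<not> trivial_limit sequentially" by simp
      have "(\<lambda>n. ks (r n) * x t) \<longlonglongrightarrow> ka * x t" by (intro tendsto_mult kconv tendsto_const)
      then have "(\<lambda>n. \<Phi> (ks (r n) * x t)) \<longlonglongrightarrow> \<Phi> (ka * x t)" by (rule isCont_tendsto_compose[OF ct])
      then show "(\<lambda>n. ennreal (\<Phi> (ks (r n) * x t))) \<longlonglongrightarrow> ennreal (\<Phi> (ka * x t))"
        by (rule tendsto_ennrealI)
    qed
    have "I ka = (\<integral>\<^sup>+ t. liminf (\<lambda>n. ennreal (\<Phi> (ks (r n) * x t))) \<partial>M)"
      by (simp add: pw I_def orlicz_modular_def)
    also have "\<dots> \<le> liminf (\<lambda>n. (\<integral>\<^sup>+ t. ennreal (\<Phi> (ks (r n) * x t)) \<partial>M))"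
      by (rule nn_integral_liminf) (rule phi_meas[OF Of xm])
    also have "\<dots> = liminf (\<lambda>n. ennreal (J (r n)))"
      by (simp add: IJ[unfolded I_def orlicz_modular_def])
    also have "\<dots> = ennreal Ja"
      by (rule lim_imp_Liminf) (auto intro: tendsto_ennrealI Jconv)
    finally show ?thesis .
  qed
  have Ifin: "I ka \<noteq> \<infinity>" using Ile by (auto simp: top_unique)
  have eJ: "enn2real (I ka) \<le> Ja" using enn2real_mono[OF Ile] Ja0 by simp
  have "F ka = ennreal ((1 / ka) * p (1, enn2real (I ka)))" using Ifin by (simp add: Fd)
  also have "\<dots> \<le> ennreal ((1 / ka) * p (1, Ja))"
    using eJ ka0 pf(6)[OF enn2real_nonneg eJ] by (intro ennreal_leI mult_left_mono) auto
  also have "\<dots> \<le> m" unfolding mmr using vle by (rule ennreal_leI)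
  finally have "F ka \<le> m" .
  moreover have "m \<le> F ka" unfolding mI using ka0 by (intro INF_lower) auto
  ultimately have "m = F ka" by simp
  then show ?thesis using ka0 unfolding m_def F_def by blast
qed

end
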